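(* Let $G$ be a polymer graph obtained by point-attaching from the monomer units $G_1,\ldots,G_k$. Then $$SO(G)>\sum_{i=1}^k SO(G_i).$$
   Context: All graphs are finite and simple. For a graph $G$ and a vertex $u$, $d_u$ denotes the degree of $u$ in $G$. The Sombor index of $G$ is $SO(G)=\sum_{uv\in E(G)}\sqrt{d_u^2+d_v^2}$. A polymer graph obtained by point-attaching from pairwise disjoint connected graphs $G_1,\ldots,G_k$ (the monomer units) is a connected graph constructed as follows: select a vertex of $G_1$ and a vertex of $G_2$ and identify these two vertices; then continue in this manner inductively, each time identifying a vertex of the graph built so far with a vertex of the next monomer unit. *)

theory Defs
  imports Complex_Main
begin

type_synonym 'a graph = "'a set \<times> 'a set set"

definition verts :: "'a graph \<Rightarrow> 'a set" where "verts G = fst G"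
definition edges :: "'a graph \<Rightarrow> 'a set set" where "edges G = snd G"

definition simple_graph :: "'a graph \<Rightarrow> bool" where
  "simple_graph G \<longleftrightarrow> finite (verts G) \<and>
     (\<forall>e\<in>edges G. \<exists>u v. e = {u, v} \<and> u \<noteq> v \<and> u \<in> verts G \<and> v \<in> verts G)"

definition degree :: "'a graph \<Rightarrow> 'a \<Rightarrow> nat" where
  "degree G u = card {e \<in> edges G. u \<in> e}"

definition adj :: "'a graph \<Rightarrow> ('a \<times> 'a) set" where
  "adj G = {(u, v). {u, v} \<in> edges G}"

definition connected_graph :: "'a graph \<Rightarrow> bool" where
  "connected_graph G \<longleftrightarrow> verts G \<noteq> {} \<and>
     (\<forall>u\<in>verts G. \<forall>v\<in>verts G. (u, v) \<in> (adj G)\<^sup>*)"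

text \<open>Sombor index: sum over edges uv of sqrt(d_u^2 + d_v^2); for an edge e = {u,v}
with u \<noteq> v, the inner sum over x \<in> e is exactly d_u^2 + d_v^2.\<close>
definition sombor :: "'a graph \<Rightarrow> real" where
  "sombor G = (\<Sum>e\<in>edges G. sqrt (\<Sum>x\<in>e. (real (degree G x))\<^sup>2))"

definition attach :: "'a graph \<Rightarrow> 'a \<Rightarrow> 'a graph \<Rightarrow> 'a \<Rightarrow> 'a graph" where
  "attach H x G' y =
     (verts H \<union> (verts G' - {y}),
      edges H \<union> ((\<lambda>e. (\<lambda>z. if z = y then x else z) ` e) ` edges G'))"

inductive polymer :: "'a graph list \<Rightarrow> 'a graph \<Rightarrow> bool" where
  single: "polymer [G1] G1"
| step: "polymer Gs H \<Longrightarrow> x \<in> verts H \<Longrightarrow> y \<in> verts G' \<Longrightarrow>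
           polymer (Gs @ [G']) (attach H x G' y)"

end

theory Submission
  imports Defs
begin

lemma simple_edge:
  assumes "simple_graph G" "e \<in> edges G"
  obtains u v where "e = {u,v}" "u \<noteq> v" "u \<in> verts G" "v \<in> verts G"
proof -
  from assms(1) have "\<forall>e\<in>edges G. \<exists>u v. e = {u, v} \<and> u \<noteq> v \<and> u \<in> verts G \<and> v \<in> verts G"
    unfolding simple_graph_def by (rule conjunct2)
  then have "\<exists>u v. e = {u, v} \<and> u \<noteq> v \<and> u \<in> verts G \<and> v \<in> verts G" using assms(2) by (rule bspec)
  then show thesis using that by metis
qed

lemma simple_sub: "simple_graph G \<Longrightarrow> edges G \<subseteq> Pow (verts G)"
proof
  fix e assume "simple_graph G" "e \<in> edges G"
  then obtain u v where "e = {u,v}" "u \<in> verts G" "v \<in> verts G" by (rule simple_edge)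
  then show "e \<in> Pow (verts G)" by simp
qed

lemma attach_strict:
  fixes H G' :: "'a graph"
  assumes sH: "simple_graph H" and sG: "simple_graph G'"
  and xH: "x \<in> verts H" and yG: "y \<in> verts G'" and disj: "verts H \<inter> verts G' = {}"
  and ex: "\<exists>e\<in>edges H. x \<in> e" and ey: "\<exists>e\<in>edges G'. y \<in> e"
  shows "sombor H + sombor G' < sombor (attach H x G' y)"
proof -
  define f where "f = (\<lambda>z. if z = y then x else z)"
  define G where "G = attach H x G' y"
  define E2 where "E2 = image f ` edges G'"
  have eG: "edges G = edges H \<union> E2" by (simp add: G_def E2_def attach_def edges_def f_def)
  have EHsub: "edges H \<subseteq> Pow (verts H)" using sH by (rule simple_sub)
  have EGsub: "edges G' \<subseteq> Pow (verts G')" using sG by (rule simple_sub)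
  have fvH: "finite (verts H)" using sH by (simp add: simple_graph_def)
  have fvG: "finite (verts G')" using sG by (simp add: simple_graph_def)
  have finH: "finite (edges H)" using finite_subset[OF EHsub] fvH by simp
  have finG': "finite (edges G')" using finite_subset[OF EGsub] fvG by simp
  have finE2: "finite E2" using finG' by (simp add: E2_def)
  have finG: "finite (edges G)" using finH finE2 eG by simp
  have xnG': "x \<notin> verts G'" using xH disj by blast
  have injf: "inj_on f (verts G')"
  proof (rule inj_onI)
    fix a b assume "a \<in> verts G'" "b \<in> verts G'" "f a = f b"
    then show "a = b" using xnG' unfolding f_def by (cases "a = y"; cases "b = y") auto
  qed
  have injE: "inj_on (image f) (edges G')"
    by (rule inj_on_image, rule inj_on_subset[OF injf]) (use EGsub in blast)
  have fx: "v = x" if fe: "e \<in> edges G'" "v \<in> verts H" "v \<in> f ` e" for e v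
  proof -
    obtain z where z: "z \<in> e" "v = f z" using fe(3) by blast
    have "z \<in> verts G'" using z(1) fe(1) EGsub by blast
    show ?thesis
    proof (cases "z = y")
      case True then show ?thesis using z by (simp add: f_def)
    next
      case False
      then have "v = z" using z by (simp add: f_def)
      then show ?thesis using \<open>z \<in> verts G'\<close> fe(2) disj by blast
    qed
  qed
  have notE2: "e \<notin> E2" if "e \<in> edges H" for e
  proof
    assume "e \<in> E2"
    then obtain e' where e': "e' \<in> edges G'" "e = f ` e'" by (auto simp: E2_def)
    from sH that obtain u w where uw: "e = {u,w}" "u \<noteq> w" "u \<in> verts H" "w \<in> verts H"
      by (rule simple_edge)
    have "u \<in> f ` e'" "w \<in> f ` e'" using uw(1) e'(2) by auto
    then have "u = x" "w = x" using fx[OF e'(1)] uw(3,4) by auto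
    then show False using uw(2) by simp
  qed
  have degH: "degree H v \<le> degree G v" for v
    unfolding degree_def by (rule card_mono) (use finG eG in auto)
  have degG': "degree G' v \<le> degree G (f v)" for v
  proof -
    have "degree G' v = card (image f ` {e\<in>edges G'. v\<in>e})"
      unfolding degree_def by (rule card_image[symmetric], rule inj_on_subset[OF injE]) auto
    also have "\<dots> \<le> degree G (f v)"
      unfolding degree_def by (rule card_mono) (use finG eG in \<open>auto simp: E2_def\<close>)
    finally show ?thesis .
  qed
  have degx: "degree G' y < degree G x"
  proof -
    obtain e0 where e0: "e0 \<in> edges H" "x \<in> e0" using ex by blast
    have "degree G' y = card (image f ` {e\<in>edges G'. y\<in>e})"
      unfolding degree_def by (rule card_image[symmetric], rule inj_on_subset[OF injE]) auto
    also have "\<dots> < card (insert e0 (image f ` {e\<in>edges G'. y\<in>e}))"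
    proof (rule psubset_card_mono)
      show "finite (insert e0 (image f ` {e\<in>edges G'. y\<in>e}))" using finG' by simp
      have "e0 \<notin> image f ` {e\<in>edges G'. y\<in>e}" using notE2[OF e0(1)] by (auto simp: E2_def)
      then show "image f ` {e\<in>edges G'. y\<in>e} \<subset> insert e0 (image f ` {e\<in>edges G'. y\<in>e})" by blast
    qed
    also have "\<dots> \<le> degree G x"
    proof (unfold degree_def, rule card_mono[OF _ subsetI])
      show "finite {e \<in> edges G. x \<in> e}" using finG by simp
      fix e assume "e \<in> insert e0 (image f ` {e\<in>edges G'. y\<in>e})"
      then consider "e = e0" | e' where "e' \<in> edges G'" "y \<in> e'" "e = f ` e'" by blast
      then show "e \<in> {e \<in> edges G. x \<in> e}"
      proof cases
        case 1 then show ?thesis using e0 eG by simp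
      next
        case 2
        have "x = f y" by (simp add: f_def)
        then have "x \<in> f ` e'" using 2(2) by (rule image_eqI)
        moreover have "e \<in> E2" using 2 by (simp add: E2_def)
        ultimately show ?thesis using eG 2(3) by simp
      qed
    qed
    finally show ?thesis .
  qed
  define t where "t e = sqrt (\<Sum>z\<in>e. (real (degree G z))\<^sup>2)" for e
  have disjE: "edges H \<inter> E2 = {}" using notE2 by blast
  have "sombor G = sum t (edges H) + sum t E2"
    unfolding sombor_def t_def eG by (rule sum.union_disjoint) (use finH finE2 disjE in auto)
  also have "sum t E2 = sum (t \<circ> image f) (edges G')"
    unfolding E2_def by (rule sum.reindex[OF injE])
  finally have sG_eq: "sombor G = sum t (edges H) + sum (t \<circ> image f) (edges G')" .
  have le1: "sombor H \<le> sum t (edges H)"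
    unfolding sombor_def t_def
    by (intro sum_mono real_sqrt_le_mono power_mono) (use degH in auto)
  have tf: "(t \<circ> image f) e = sqrt (\<Sum>z\<in>e. (real (degree G (f z)))\<^sup>2)" if "e \<in> edges G'" for e
  proof -
    have "inj_on f e" by (rule inj_on_subset[OF injf]) (use that EGsub in blast)
    then show ?thesis unfolding t_def by (simp add: sum.reindex)
  qed
  have finE: "finite e" if "e \<in> edges G'" for e
    using that EGsub fvG finite_subset by blast
  have lt2: "sombor G' < sum (t \<circ> image f) (edges G')"
    unfolding sombor_def
  proof (rule sum_strict_mono_ex1[OF finG'])
    show "\<forall>e\<in>edges G'. sqrt (\<Sum>z\<in>e. (real (degree G' z))\<^sup>2) \<le> (t \<circ> image f) e"
      using tf by (auto intro!: sum_mono real_sqrt_le_mono power_mono degG')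
    obtain e where e: "e \<in> edges G'" "y \<in> e" using ey by blast
    have "sqrt (\<Sum>z\<in>e. (real (degree G' z))\<^sup>2) < sqrt (\<Sum>z\<in>e. (real (degree G (f z)))\<^sup>2)"
    proof (rule real_sqrt_less_mono, rule sum_strict_mono_ex1[OF finE[OF e(1)]])
      show "\<forall>z\<in>e. (real (degree G' z))\<^sup>2 \<le> (real (degree G (f z)))\<^sup>2"
        by (auto intro!: power_mono degG')
      have "f y = x" by (simp add: f_def)
      then have "(real (degree G' y))\<^sup>2 < (real (degree G (f y)))\<^sup>2"
        using degx by (simp add: power_strict_mono)
      then show "\<exists>z\<in>e. (real (degree G' z))\<^sup>2 < (real (degree G (f z)))\<^sup>2" using e by blast
    qed
    then show "\<exists>e\<in>edges G'. sqrt (\<Sum>z\<in>e. (real (degree G' z))\<^sup>2) < (t \<circ> image f) e"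
      using e tf by auto
  qed
  show ?thesis using sG_eq le1 lt2 unfolding G_def by linarith
qed

lemma attach_simple:
  fixes H G' :: "'a graph"
  assumes sH: "simple_graph H" and sG: "simple_graph G'"
  and xH: "x \<in> verts H" and xnG': "x \<notin> verts G'"
  shows "simple_graph (attach H x G' y)"
  unfolding simple_graph_def
proof (intro conjI ballI)
  show "finite (verts (attach H x G' y))" using sH sG
    by (simp add: attach_def verts_def simple_graph_def)
  fix e assume "e \<in> edges (attach H x G' y)"
  then consider "e \<in> edges H" | e' where "e' \<in> edges G'" "e = (\<lambda>z. if z = y then x else z) ` e'"
    by (auto simp: attach_def edges_def)
  then show "\<exists>u v. e = {u, v} \<and> u \<noteq> v \<and> u \<in> verts (attach H x G' y) \<and> v \<in> verts (attach H x G' y)"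
  proof cases
    case 1
    from sH 1 obtain u w where "e = {u,w}" "u \<noteq> w" "u \<in> verts H" "w \<in> verts H"
      by (rule simple_edge)
    then show ?thesis by (auto simp: attach_def verts_def)
  next
    case 2
    from sG 2(1) obtain u w where uw: "e' = {u,w}" "u \<noteq> w" "u \<in> verts G'" "w \<in> verts G'"
      by (rule simple_edge)
    show ?thesis
      apply (rule exI[of _ "if u = y then x else u"], rule exI[of _ "if w = y then x else w"])
      using uw 2(2) xH xnG' by (auto simp: attach_def verts_def)
  qed
qed

lemma polymer_inv:
  assumes "polymer Gs G"
  shows "(\<forall>g\<in>set Gs. simple_graph g \<and> (\<forall>v\<in>verts g. \<exists>e\<in>edges g. v \<in> e)) \<longrightarrow>
    (\<forall>i<length Gs. \<forall>j<length Gs. i \<noteq> j \<longrightarrow> verts (Gs ! i) \<inter> verts (Gs ! j) = {}) \<longrightarrow>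
    simple_graph G \<and> verts G \<subseteq> \<Union>(verts ` set Gs) \<and> (\<forall>v\<in>verts G. \<exists>e\<in>edges G. v \<in> e) \<and>
    (\<Sum>i<length Gs. sombor (Gs ! i)) \<le> sombor G \<and>
    (2 \<le> length Gs \<longrightarrow> (\<Sum>i<length Gs. sombor (Gs ! i)) < sombor G)"
  using assms
proof induction
  case (single G1)
  then show ?case by simp
next
  case (step Gs H x y G')
  show ?case
  proof (intro impI)
    assume A: "\<forall>g\<in>set (Gs @ [G']). simple_graph g \<and> (\<forall>v\<in>verts g. \<exists>e\<in>edges g. v \<in> e)"
    assume D: "\<forall>i<length (Gs @ [G']). \<forall>j<length (Gs @ [G']). i \<noteq> j \<longrightarrow>
       verts ((Gs @ [G']) ! i) \<inter> verts ((Gs @ [G']) ! j) = {}"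
    have A': "\<forall>g\<in>set Gs. simple_graph g \<and> (\<forall>v\<in>verts g. \<exists>e\<in>edges g. v \<in> e)" using A by simp
    have D': "\<forall>i<length Gs. \<forall>j<length Gs. i \<noteq> j \<longrightarrow> verts (Gs ! i) \<inter> verts (Gs ! j) = {}"
    proof (intro allI impI)
      fix i j assume "i < length Gs" "j < length Gs" "i \<noteq> j"
      then show "verts (Gs ! i) \<inter> verts (Gs ! j) = {}"
        using D[rule_format, of i j] by (simp add: nth_append)
    qed
    have IH: "simple_graph H \<and> verts H \<subseteq> \<Union>(verts ` set Gs) \<and> (\<forall>v\<in>verts H. \<exists>e\<in>edges H. v \<in> e) \<and>
      (\<Sum>i<length Gs. sombor (Gs ! i)) \<le> sombor H"
      using step.IH A' D' by blast
    have sG': "simple_graph G'" and nG': "\<forall>v\<in>verts G'. \<exists>e\<in>edges G'. v \<in> e" using A by auto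
    have disj: "verts H \<inter> verts G' = {}"
    proof -
      have "verts g \<inter> verts G' = {}" if "g \<in> set Gs" for g
      proof -
        obtain i where i: "i < length Gs" "g = Gs ! i" using \<open>g \<in> set Gs\<close> by (auto simp: in_set_conv_nth)
        show ?thesis using D[rule_format, of i "length Gs"] i by (simp add: nth_append)
      qed
      then show ?thesis using IH by blast
    qed
    have lt: "sombor H + sombor G' < sombor (attach H x G' y)"
      by (rule attach_strict) (use IH sG' step.hyps disj nG' in auto)
    have sumeq: "(\<Sum>i<length (Gs @ [G']). sombor ((Gs @ [G']) ! i)) = (\<Sum>i<length Gs. sombor (Gs ! i)) + sombor G'"
      by (simp add: nth_append)
    have simp: "simple_graph (attach H x G' y)"
      by (rule attach_simple) (use IH sG' step.hyps disj in auto)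
    have vs: "verts (attach H x G' y) \<subseteq> \<Union>(verts ` set (Gs @ [G']))"
      using IH by (auto simp: attach_def verts_def)
    have ni: "\<forall>v\<in>verts (attach H x G' y). \<exists>e\<in>edges (attach H x G' y). v \<in> e"
    proof
      fix v assume "v \<in> verts (attach H x G' y)"
      then consider "v \<in> verts H" | "v \<in> verts G'" "v \<noteq> y" by (auto simp: attach_def verts_def)
      then show "\<exists>e\<in>edges (attach H x G' y). v \<in> e"
      proof cases
        case 1 then show ?thesis using IH by (auto simp: attach_def edges_def)
      next
        case 2
        then obtain e where "e \<in> edges G'" "v \<in> e" using nG' by blast
        then have e1: "(\<lambda>z. if z = y then x else z) ` e \<in> edges (attach H x G' y)"
          by (simp add: attach_def edges_def)
        have "v = (\<lambda>z. if z = y then x else z) v" using 2 by simp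
        then have "v \<in> (\<lambda>z. if z = y then x else z) ` e" using \<open>v \<in> e\<close> by (rule image_eqI)
        then show ?thesis by (rule bexI[OF _ e1])
      qed
    qed
    show "simple_graph (attach H x G' y) \<and> verts (attach H x G' y) \<subseteq> \<Union>(verts ` set (Gs @ [G'])) \<and>
      (\<forall>v\<in>verts (attach H x G' y). \<exists>e\<in>edges (attach H x G' y). v \<in> e) \<and>
      (\<Sum>i<length (Gs @ [G']). sombor ((Gs @ [G']) ! i)) \<le> sombor (attach H x G' y) \<and>
      (2 \<le> length (Gs @ [G']) \<longrightarrow> (\<Sum>i<length (Gs @ [G']). sombor ((Gs @ [G']) ! i)) < sombor (attach H x G' y))"
    proof (intro conjI impI)
      show "simple_graph (attach H x G' y)" by (rule simp)
      show "verts (attach H x G' y) \<subseteq> \<Union>(verts ` set (Gs @ [G']))" by (rule vs)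
      show "\<forall>v\<in>verts (attach H x G' y). \<exists>e\<in>edges (attach H x G' y). v \<in> e" by (rule ni)
      have "(\<Sum>i<length Gs. sombor (Gs ! i)) \<le> sombor H" using IH by blast
      then have "(\<Sum>i<length Gs. sombor (Gs ! i)) + sombor G' < sombor (attach H x G' y)" using lt by linarith
      then show lt2: "(\<Sum>i<length (Gs @ [G']). sombor ((Gs @ [G']) ! i)) < sombor (attach H x G' y)"
        unfolding sumeq .
      then show "(\<Sum>i<length (Gs @ [G']). sombor ((Gs @ [G']) ! i)) \<le> sombor (attach H x G' y)"
        by linarith
    qed
  qed
qed

lemma no_isolated:
  assumes "connected_graph g" "card (verts g) \<ge> 2"
  shows "\<forall>v\<in>verts g. \<exists>e\<in>edges g. v \<in> e"
proof
  fix v assume v: "v \<in> verts g"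
  have "verts g - {v} \<noteq> {}"
  proof
    assume "verts g - {v} = {}"
    then have "verts g \<subseteq> {v}" by blast
    then have "card (verts g) \<le> card {v}" by (intro card_mono) simp_all
    then have "card (verts g) \<le> 1" by simp
    then show False using assms(2) by simp
  qed
  then obtain u where u: "u \<in> verts g" "u \<noteq> v" by blast
  have "(v, u) \<in> (adj g)\<^sup>*" using assms(1) v u unfolding connected_graph_def by blast
  then show "\<exists>e\<in>edges g. v \<in> e"
  proof (cases rule: converse_rtranclE)
    case base then show ?thesis using u by simp
  next
    case (step w)
    then have "{v, w} \<in> edges g" by (simp add: adj_def)
    then show ?thesis by blast
  qed
qed

theorem mainTheorem1:
  fixes Gs :: "'a graph list" and G :: "'a graph"
  assumes "length Gs \<ge> 2"
    and "\<forall>i<length Gs. simple_graph (Gs ! i) \<and> connected_graph (Gs ! i)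
                         \<and> card (verts (Gs ! i)) \<ge> 2"
    and "\<forall>i<length Gs. \<forall>j<length Gs. i \<noteq> j \<longrightarrow> verts (Gs ! i) \<inter> verts (Gs ! j) = {}"
    and "polymer Gs G"
  shows "sombor G > (\<Sum>i<length Gs. sombor (Gs ! i))"
proof -
  have "\<forall>g\<in>set Gs. simple_graph g \<and> (\<forall>v\<in>verts g. \<exists>e\<in>edges g. v \<in> e)"
  proof
    fix g assume "g \<in> set Gs"
    then obtain i where i: "i < length Gs" "g = Gs ! i" by (auto simp: in_set_conv_nth)
    then have "simple_graph g" "connected_graph g" "card (verts g) \<ge> 2" using assms(2) by auto
    then show "simple_graph g \<and> (\<forall>v\<in>verts g. \<exists>e\<in>edges g. v \<in> e)" using no_isolated by blast
  qed
  then show ?thesis using polymer_inv[OF assms(4)] assms(1,3) by blast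
qed

end
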